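(* Let $n\ge 3$, $d\ge 1$, and set $c=\frac{3.9d}{n+2}$. For every integer $r$ with $c<r<1.1c$, the number of counter-points $p\in[n]^d$ with $\tau_1(p)=r$ is at least \[\left(1-2de^{-d/(40000(n+2))}\right)\binom{d}{r}2^r(n-2)^{d-r}.\]
   Context: Let $[n]=\{1,\dots,n\}$. For $p\in[n]^d$ and $i\in[n]$ let $\pi_i(p)=|\{j\in[d]:p_j=i\}|$ and $\tau_1(p)=\pi_1(p)+\pi_n(p)$. A point $p\in[n]^d$ is a counter-point if $c<\tau_1(p)<1.1c$ and $\frac{0.99(d-\tau_1(p))}{n-2}\le\pi_i(p)\le\frac{1.01(d-\tau_1(p))}{n-2}$ for all $1<i<n$. *)

theory Defs
  imports "HOL-Analysis.Analysis"
begin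

definition grid :: "nat \<Rightarrow> nat \<Rightarrow> (nat \<Rightarrow> nat) set" where
  "grid n d = ({1..d} \<rightarrow>\<^sub>E {1..n})"

definition pi_cnt :: "nat \<Rightarrow> (nat \<Rightarrow> nat) \<Rightarrow> nat \<Rightarrow> nat" where
  "pi_cnt d p i = card {j \<in> {1..d}. p j = i}"

definition tau1 :: "nat \<Rightarrow> nat \<Rightarrow> (nat \<Rightarrow> nat) \<Rightarrow> nat" where
  "tau1 n d p = pi_cnt d p 1 + pi_cnt d p n"

definition counter_point :: "nat \<Rightarrow> nat \<Rightarrow> real \<Rightarrow> (nat \<Rightarrow> nat) \<Rightarrow> bool" where
  "counter_point n d c p \<longleftrightarrow>
     p \<in> grid n d \<and>
     c < real (tau1 n d p) \<and> real (tau1 n d p) < 1.1 * c \<and>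
     (\<forall>i. 1 < i \<and> i < n \<longrightarrow>
        0.99 * (real d - real (tau1 n d p)) / (real n - 2) \<le> real (pi_cnt d p i) \<and>
        real (pi_cnt d p i) \<le> 1.01 * (real d - real (tau1 n d p)) / (real n - 2))"

end

theory Submission
  imports Defs
begin

lemma tau1_alt:
  assumes "n \<noteq> 1"
  shows "tau1 n d p = card {j\<in>{1..d}. p j \<in> {1,n}}"
proof -
  have "{j\<in>{1..d}. p j \<in> {1,n}} = {j\<in>{1..d}. p j = 1} \<union> {j\<in>{1..d}. p j = n}" by auto
  moreover have "{j\<in>{1..d}. p j = 1} \<inter> {j\<in>{1..d}. p j = n} = {}" using assms by auto
  ultimately show ?thesis unfolding tau1_def pi_cnt_def
    by (simp add: card_Un_disjoint)
qed

lemma class_set: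
  fixes n d :: nat and p :: "nat \<Rightarrow> nat"
  assumes "n \<ge> 2" "A \<subseteq> {1..d}"
    and "p \<in> PiE {1..d} (\<lambda>j. if j \<in> A then {1,n} else {2..<n})"
  shows "{j\<in>{1..d}. p j \<in> {1,n}} = A"
proof (intro equalityI subsetI)
  fix j assume j: "j \<in> {j\<in>{1..d}. p j \<in> {1,n}}"
  show "j \<in> A"
  proof (rule ccontr)
    assume "j \<notin> A"
    have "j \<in> {1..d}" using j by simp
    have "p j \<in> (if j \<in> A then {1,n} else {2..<n})" using PiE_mem[OF assms(3) \<open>j \<in> {1..d}\<close>] .
    then have "p j \<in> {2..<n}" using \<open>j \<notin> A\<close> by simp
    then show False using j by auto
  qed
next
  fix j assume "j \<in> A"
  then have j: "j \<in> {1..d}" using assms(2) by auto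
  have "p j \<in> (if j \<in> A then {1,n} else {2..<n})" using PiE_mem[OF assms(3) j] .
  then show "j \<in> {j\<in>{1..d}. p j \<in> {1,n}}" using j \<open>j \<in> A\<close> by simp
qed

lemma key:
  fixes w :: "nat \<Rightarrow> real"
  assumes n2: "n \<ge> 2"
  shows "(\<Sum>p\<in>{p\<in>grid n d. tau1 n d p = r}. \<Prod>j\<in>{1..d}. w (p j))
       = real (d choose r) * (w 1 + w n)^r * (\<Sum>v\<in>{2..<n}. w v)^(d-r)"
proof -
  define F where "F A = (\<lambda>j. if j \<in> A then {1,n} else {2..<n})" for A :: "nat set"
  define Sub where "Sub = {A. A \<subseteq> {1..d} \<and> card A = r}"
  have n1: "n \<noteq> 1" using n2 by simp
  have S_eq: "{p\<in>grid n d. tau1 n d p = r} = (\<Union>A\<in>Sub. PiE {1..d} (F A))"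
  proof (intro equalityI subsetI)
    fix p assume p: "p \<in> {p\<in>grid n d. tau1 n d p = r}"
    define A where "A = {j\<in>{1..d}. p j \<in> {1,n}}"
    have "A \<in> Sub" using p tau1_alt[OF n1, of d p] unfolding Sub_def A_def by auto
    moreover have "p \<in> PiE {1..d} (F A)"
      using p unfolding grid_def F_def A_def by (auto simp: PiE_iff)
    ultimately show "p \<in> (\<Union>A\<in>Sub. PiE {1..d} (F A))" by blast
  next
    fix p assume "p \<in> (\<Union>A\<in>Sub. PiE {1..d} (F A))"
    then obtain A where A: "A \<in> Sub" "p \<in> PiE {1..d} (F A)" by blast
    have cs: "{j\<in>{1..d}. p j \<in> {1,n}} = A"
      using class_set[OF n2, of A d p] A unfolding Sub_def F_def by auto
    have "p \<in> grid n d"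
      using A(2) n2 unfolding grid_def F_def by (auto simp: PiE_iff split: if_splits)
    moreover have "tau1 n d p = r" using tau1_alt[OF n1, of d p] cs A(1) unfolding Sub_def by simp
    ultimately show "p \<in> {p\<in>grid n d. tau1 n d p = r}" by simp
  qed
  have disj: "\<forall>A\<in>Sub. \<forall>B\<in>Sub. A \<noteq> B \<longrightarrow> PiE {1..d} (F A) \<inter> PiE {1..d} (F B) = {}"
  proof (intro ballI impI)
    fix A B assume AB: "A \<in> Sub" "B \<in> Sub" "A \<noteq> B"
    show "PiE {1..d} (F A) \<inter> PiE {1..d} (F B) = {}"
    proof (rule ccontr)
      assume "PiE {1..d} (F A) \<inter> PiE {1..d} (F B) \<noteq> {}"
      then obtain p where "p \<in> PiE {1..d} (F A)" "p \<in> PiE {1..d} (F B)" by blast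
      then have "{j\<in>{1..d}. p j \<in> {1,n}} = A" "{j\<in>{1..d}. p j \<in> {1,n}} = B"
        using class_set[OF n2, of A d p] class_set[OF n2, of B d p] AB unfolding Sub_def F_def by auto
      then show False using AB by simp
    qed
  qed
  have inner: "(\<Sum>p\<in>PiE {1..d} (F A). \<Prod>j\<in>{1..d}. w (p j))
       = (w 1 + w n)^r * (\<Sum>v\<in>{2..<n}. w v)^(d-r)" if A: "A \<in> Sub" for A
  proof -
    have "(\<Sum>p\<in>PiE {1..d} (F A). \<Prod>j\<in>{1..d}. w (p j)) = (\<Prod>j\<in>{1..d}. \<Sum>v\<in>F A j. w v)"
      by (rule prod_sum_PiE[symmetric]) (auto simp: F_def)
    also have "\<dots> = (\<Prod>j\<in>{1..d}. if j \<in> A then w 1 + w n else (\<Sum>v\<in>{2..<n}. w v))"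
      using n1 by (intro prod.cong) (auto simp: F_def)
    also have "\<dots> = (\<Prod>j\<in>{1..d} \<inter> {j. j \<in> A}. w 1 + w n) * (\<Prod>j\<in>{1..d} \<inter> - {j. j \<in> A}. (\<Sum>v\<in>{2..<n}. w v))"
      by (rule prod.If_cases) simp
    also have "{1..d} \<inter> {j. j \<in> A} = A" using A unfolding Sub_def by auto
    also have "card ({1..d} \<inter> - {j. j \<in> A}) = d - r"
    proof -
      have "{1..d} \<inter> - {j. j \<in> A} = {1..d} - A" by auto
      moreover have "A \<subseteq> {1..d}" "card A = r" using A unfolding Sub_def by auto
      moreover have "finite A" using \<open>A \<subseteq> {1..d}\<close> finite_subset by blast
      ultimately show ?thesis using card_Diff_subset[of A "{1..d}"] by simp
    qed
    then have "(\<Prod>j\<in>{1..d} \<inter> - {j. j \<in> A}. (\<Sum>v\<in>{2..<n}. w v)) = (\<Sum>v\<in>{2..<n}. w v)^(d-r)"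
      by simp
    finally show ?thesis using A unfolding Sub_def by simp
  qed
  have "(\<Sum>p\<in>{p\<in>grid n d. tau1 n d p = r}. \<Prod>j\<in>{1..d}. w (p j))
      = (\<Sum>A\<in>Sub. \<Sum>p\<in>PiE {1..d} (F A). \<Prod>j\<in>{1..d}. w (p j))"
    unfolding S_eq
  proof (rule sum.UNION_disjoint[OF _ _ disj])
    show "finite Sub" unfolding Sub_def by (rule finite_subset[of _ "Pow {1..d}"]) auto
    show "\<forall>A\<in>Sub. finite (PiE {1..d} (F A))" by (auto simp: F_def intro!: finite_PiE)
  qed
  also have "\<dots> = (\<Sum>A\<in>Sub. (w 1 + w n)^r * (\<Sum>v\<in>{2..<n}. w v)^(d-r))"
    by (rule sum.cong) (simp_all only: inner)
  also have "\<dots> = real (card Sub) * ((w 1 + w n)^r * (\<Sum>v\<in>{2..<n}. w v)^(d-r))" by simp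
  also have "card Sub = d choose r" unfolding Sub_def using n_subsets[of "{1..d}" r] by simp
  finally show ?thesis by simp
qed


lemma mgf:
  fixes x :: real
  assumes "1 < i" "i < n"
  shows "(\<Sum>p\<in>{p\<in>grid n d. tau1 n d p = r}. x ^ pi_cnt d p i)
       = real (d choose r) * 2^r * (real n - 3 + x)^(d-r)"
proof -
  define w where "w v = (if v = i then x else 1)" for v
  have n2: "n \<ge> 2" using assms by simp
  have pw: "(\<Prod>j\<in>{1..d}. w (p j)) = x ^ pi_cnt d p i" for p :: "nat \<Rightarrow> nat"
  proof -
    have "(\<Prod>j\<in>{1..d}. w (p j)) = (\<Prod>j\<in>{1..d} \<inter> {j. p j = i}. x) * (\<Prod>j\<in>{1..d} \<inter> - {j. p j = i}. 1)"
      unfolding w_def by (rule prod.If_cases) simp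
    also have "{1..d} \<inter> {j. p j = i} = {j\<in>{1..d}. p j = i}" by auto
    finally show ?thesis unfolding pi_cnt_def by simp
  qed
  have sw: "(\<Sum>v\<in>{2..<n}. w v) = real n - 3 + x"
  proof -
    have "(\<Sum>v\<in>{2..<n}. w v) = (\<Sum>v\<in>{2..<n}. 1 + (if v = i then x - 1 else 0))"
      unfolding w_def by (rule sum.cong) auto
    also have "\<dots> = real (n - 2) + (x - 1)" using assms by (simp add: sum.distrib)
    finally show ?thesis using n2 by (simp add: of_nat_diff)
  qed
  have "w 1 = 1" "w n = 1" using assms unfolding w_def by auto
  then show ?thesis using key[OF n2, of w d r] pw sw by simp
qed

lemma cardS:
  assumes "n \<ge> 2"
  shows "real (card {p\<in>grid n d. tau1 n d p = r}) = real (d choose r) * 2^r * (real n - 2)^(d-r)"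
proof -
  have "real (card {p\<in>grid n d. tau1 n d p = r}) = (\<Sum>p\<in>{p\<in>grid n d. tau1 n d p = r}. \<Prod>j\<in>{1..d}. (\<lambda>_. 1::real) (p j))"
    by simp
  also have "\<dots> = real (d choose r) * 2^r * (real n - 2)^(d-r)"
    using key[OF assms, of "\<lambda>_. 1" d r] assms by (simp add: of_nat_diff)
  finally show ?thesis .
qed

lemma finS: "finite {p\<in>grid n d. tau1 n d p = r}"
  unfolding grid_def by (rule finite_subset[of _ "{1..d} \<rightarrow>\<^sub>E {1..n}"]) (auto intro: finite_PiE)

lemma tail_bound:
  fixes x K :: real
  assumes n3: "n \<ge> 3" and i: "1 < i" "i < n" and x: "x > 0"
    and T: "T \<subseteq> {p\<in>grid n d. tau1 n d p = r}"
    and pos: "\<forall>p\<in>T. 0 \<le> (real (pi_cnt d p i) - K) * ln x"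
  shows "real (card T) \<le> real (d choose r) * 2^r * (real n - 2)^(d-r)
           * exp (real (d-r) * (x-1) / (real n - 2) - K * ln x)"
proof -
  let ?S = "{p\<in>grid n d. tau1 n d p = r}"
  have fT: "finite T" using finite_subset[OF T finS] .
  have "real (card T) = (\<Sum>p\<in>T. 1::real)" by simp
  also have "\<dots> \<le> (\<Sum>p\<in>T. exp ((real (pi_cnt d p i) - K) * ln x))"
    by (rule sum_mono) (use pos in auto)
  also have "\<dots> \<le> (\<Sum>p\<in>?S. exp ((real (pi_cnt d p i) - K) * ln x))"
    by (rule sum_mono2[OF finS T]) auto
  also have "\<dots> = (\<Sum>p\<in>?S. exp (- K * ln x) * x ^ pi_cnt d p i)"
  proof (rule sum.cong)
    fix p
    have "exp ((real (pi_cnt d p i) - K) * ln x) = exp (- K * ln x) * exp (real (pi_cnt d p i) * ln x)"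
      by (simp add: algebra_simps flip: exp_add)
    also have "exp (real (pi_cnt d p i) * ln x) = x ^ pi_cnt d p i"
      using x by (simp add: exp_of_nat_mult)
    finally show "exp ((real (pi_cnt d p i) - K) * ln x) = exp (- K * ln x) * x ^ pi_cnt d p i" .
  qed simp
  also have "\<dots> = exp (- K * ln x) * (real (d choose r) * 2^r * (real n - 3 + x)^(d-r))"
    by (simp add: mgf[OF i] flip: sum_distrib_left)
  also have "\<dots> \<le> exp (- K * ln x) * (real (d choose r) * 2^r * ((real n - 2)^(d-r) * exp (real (d-r) * (x-1) / (real n - 2))))"
  proof -
    have n2: "real n - 2 > 0" using n3 by simp
    have "real n - 3 + x = (real n - 2) * (1 + (x-1)/(real n - 2))" using n2 by (simp add: field_simps)
    also have "\<dots> \<le> (real n - 2) * exp ((x-1)/(real n - 2))"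
      using n2 by (intro mult_left_mono) auto
    finally have "(real n - 3 + x)^(d-r) \<le> ((real n - 2) * exp ((x-1)/(real n - 2)))^(d-r)"
      using n3 x by (intro power_mono) auto
    also have "\<dots> = (real n - 2)^(d-r) * exp (real (d-r) * (x-1) / (real n - 2))"
      by (simp add: power_mult_distrib exp_of_nat_mult[symmetric])
    finally show ?thesis by (intro mult_left_mono) auto
  qed
  also have "\<dots> = real (d choose r) * 2^r * (real n - 2)^(d-r)
           * exp (real (d-r) * (x-1) / (real n - 2) - K * ln x)"
    by (simp add: algebra_simps flip: exp_add)
  finally show ?thesis .
qed


lemma ln101: "0.00994 \<le> ln (1.01::real)"
proof -
  have "exp (0.000994::real) \<le> 1 + 0.000994 + 0.000994^2" by (rule exp_bound) auto
  then have "exp (0.000994::real) ^ 10 \<le> (1 + 0.000994 + 0.000994^2) ^ 10"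
    by (intro power_mono) auto
  moreover have "exp (0.000994::real) ^ 10 = exp 0.00994"
    by (simp flip: exp_of_nat_mult)
  moreover have "(1 + 0.000994 + (0.000994::real)^2) ^ 10 \<le> 1.01" by (simp add: power_divide)
  ultimately have "exp (0.00994::real) \<le> 1.01" by linarith
  then show ?thesis by (subst ln_ge_iff) auto
qed

lemma ln099: "- 0.01006 \<le> ln (0.99::real)"
proof -
  have "1 + 0.01006 + (0.01006::real)^2/2 \<le> exp 0.01006" by (rule exp_lower_Taylor_quadratic) auto
  moreover have "1 \<le> (1 + 0.01006 + (0.01006::real)^2/2) * 0.99" by (simp add: power2_eq_square)
  moreover have "(1 + 0.01006 + (0.01006::real)^2/2) * 0.99 \<le> exp 0.01006 * 0.99"
    using calculation(1) by (rule mult_right_mono) simp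
  ultimately have "1 \<le> exp (0.01006::real) * 0.99" by linarith
  then have "exp (- 0.01006::real) \<le> 0.99" by (simp add: exp_minus field_simps)
  then show ?thesis by (subst ln_ge_iff) auto
qed

theorem lemma22:
  fixes n d r :: nat and c :: real
  assumes "n \<ge> 3" and "d \<ge> 1"
    and "c = 3.9 * real d / (real n + 2)"
    and "c < real r" and "real r < 1.1 * c"
  shows "real (card {p. counter_point n d c p \<and> tau1 n d p = r})
         \<ge> (1 - 2 * real d * exp (- real d / (40000 * (real n + 2))))
            * real (d choose r) * 2 ^ r * (real n - 2) ^ (d - r)"
proof -
  define N where "N = real n"
  define D where "D = real d"
  define R where "R = real r"
  define E where "E = D / (40000 * (N + 2))"
  define mu where "mu = (D - R) / (N - 2)"
  define T where "T = real (d choose r) * 2 ^ r * (real n - 2) ^ (d - r)"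
  let ?S = "{p\<in>grid n d. tau1 n d p = r}"
  have N3: "N \<ge> 3" using assms(1) unfolding N_def by simp
  have D1: "D \<ge> 1" using assms(2) unfolding D_def by simp
  have h1: "100 * (R * (N + 2)) < 429 * D"
  proof -
    have "R < 1.1 * (3.9 * D / (N + 2))" using assms(3,5) unfolding R_def D_def N_def by simp
    also have "\<dots> = 4.29 * D / (N + 2)" by simp
    finally have "R * (N + 2) < 4.29 * D" using N3 by (simp add: field_simps)
    then show ?thesis by simp
  qed
  have RD: "R < D"
  proof -
    have "D * 5 \<le> D * (N + 2)" using N3 D1 by (intro mult_left_mono) auto
    then have "R * (N + 2) < D * (N + 2)" using h1 D1 by linarith
    then show ?thesis using N3 by simp
  qed
  then have rd: "r < d" unfolding R_def D_def by simp
  have dr: "real (d - r) = D - R" using rd unfolding D_def R_def by (simp add: of_nat_diff)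
  have h2: "1576 * (D - R) * (N + 2) \<ge> 1000 * (D * (N - 2))"
  proof -
    have a: "D * 3 \<le> D * N" using N3 D1 by (intro mult_left_mono) auto
    have b: "100 * (R * N) + 200 * R < 429 * D" using h1 by (simp add: algebra_simps)
    have c: "1576 * (D - R) * (N + 2) - 1000 * (D * (N - 2)) = 576 * (D * N) + 5152 * D - 1576 * (R * N) - 3152 * R"
      by (simp add: algebra_simps)
    show ?thesis using a b c D1 by linarith
  qed
  have muE: "E \<le> 0.0000394 * mu"
    unfolding E_def mu_def using h2 N3 by (simp add: field_simps)
  have mu0: "mu \<ge> 0" unfolding mu_def using RD N3 by simp
  have e0: "exp (- E) \<ge> 0" by simp
  have T0: "T \<ge> 0" unfolding T_def using assms(1) by simp
  have cS: "real (card ?S) = T" unfolding T_def using cardS[of n d r] assms(1) by simp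
  define Lo where "Lo i = {p\<in>?S. real (pi_cnt d p i) < 0.99 * (real d - real (tau1 n d p)) / (real n - 2)}" for i
  define Hi where "Hi i = {p\<in>?S. real (pi_cnt d p i) > 1.01 * (real d - real (tau1 n d p)) / (real n - 2)}" for i
  have Lo_b: "real (card (Lo i)) \<le> T * exp (- E)" if i: "1 < i" "i < n" for i
  proof -
    have "real (card (Lo i)) \<le> T * exp (real (d-r) * (0.99-1) / (real n - 2) - (0.99 * mu) * ln 0.99)"
      unfolding T_def
    proof (rule tail_bound[OF assms(1) i])
      show "Lo i \<subseteq> ?S" unfolding Lo_def by auto
      show "\<forall>p\<in>Lo i. 0 \<le> (real (pi_cnt d p i) - 0.99 * mu) * ln (0.99::real)"
      proof
        fix p assume "p \<in> Lo i"
        then have "real (pi_cnt d p i) - 0.99 * mu \<le> 0"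
          unfolding Lo_def mu_def D_def R_def N_def by auto
        moreover have "ln (0.99::real) \<le> 0" by simp
        ultimately show "0 \<le> (real (pi_cnt d p i) - 0.99 * mu) * ln (0.99::real)"
          by (rule mult_nonpos_nonpos)
      qed
    qed simp
    also have "\<dots> \<le> T * exp (- E)"
    proof (rule mult_left_mono[OF _ T0], subst exp_le_cancel_iff)
      have "real (d-r) * (0.99-1) / (real n - 2) = - 0.01 * mu" unfolding dr mu_def N_def by simp
      moreover have "(0.99 * mu) * (- 0.01006) \<le> (0.99 * mu) * ln 0.99"
        using ln099 mu0 by (intro mult_left_mono) auto
      moreover have "0.01 * mu - (0.99 * mu) * 0.01006 = 0.0000406 * mu" by simp
      ultimately show "real (d-r) * (0.99-1) / (real n - 2) - (0.99 * mu) * ln 0.99 \<le> - E"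
        using muE mu0 by (simp add: algebra_simps)
    qed
    finally show ?thesis .
  qed
  have Hi_b: "real (card (Hi i)) \<le> T * exp (- E)" if i: "1 < i" "i < n" for i
  proof -
    have "real (card (Hi i)) \<le> T * exp (real (d-r) * (1.01-1) / (real n - 2) - (1.01 * mu) * ln 1.01)"
      unfolding T_def
    proof (rule tail_bound[OF assms(1) i])
      show "Hi i \<subseteq> ?S" unfolding Hi_def by auto
      show "\<forall>p\<in>Hi i. 0 \<le> (real (pi_cnt d p i) - 1.01 * mu) * ln (1.01::real)"
      proof
        fix p assume "p \<in> Hi i"
        then have "real (pi_cnt d p i) - 1.01 * mu \<ge> 0"
          unfolding Hi_def mu_def D_def R_def N_def by auto
        moreover have "ln (1.01::real) \<ge> 0" by simp
        ultimately show "0 \<le> (real (pi_cnt d p i) - 1.01 * mu) * ln (1.01::real)"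
          by (rule mult_nonneg_nonneg)
      qed
    qed simp
    also have "\<dots> \<le> T * exp (- E)"
    proof (rule mult_left_mono[OF _ T0], subst exp_le_cancel_iff)
      have "real (d-r) * (1.01-1) / (real n - 2) = 0.01 * mu" unfolding dr mu_def N_def by simp
      moreover have "(1.01 * mu) * 0.00994 \<le> (1.01 * mu) * ln 1.01"
        using ln101 mu0 by (intro mult_left_mono) auto
      moreover have "0.01 * mu - (1.01 * mu) * 0.00994 = - 0.0000394 * mu" by simp
      ultimately show "real (d-r) * (1.01-1) / (real n - 2) - (1.01 * mu) * ln 1.01 \<le> - E"
        using muE mu0 by (simp add: algebra_simps)
    qed
    finally show ?thesis .
  qed
  define U where "U = (\<Union>i\<in>{2..<n}. Lo i \<union> Hi i)"
  have sub: "?S - U \<subseteq> {p. counter_point n d c p \<and> tau1 n d p = r}"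
  proof
    fix p assume p: "p \<in> ?S - U"
    have "\<forall>i. 1 < i \<and> i < n \<longrightarrow>
        0.99 * (real d - real (tau1 n d p)) / (real n - 2) \<le> real (pi_cnt d p i) \<and>
        real (pi_cnt d p i) \<le> 1.01 * (real d - real (tau1 n d p)) / (real n - 2)"
    proof (intro allI impI)
      fix i assume "1 < i \<and> i < n"
      then have "i \<in> {2..<n}" by auto
      then have "p \<notin> Lo i" "p \<notin> Hi i" using p unfolding U_def by auto
      then show "0.99 * (real d - real (tau1 n d p)) / (real n - 2) \<le> real (pi_cnt d p i) \<and>
        real (pi_cnt d p i) \<le> 1.01 * (real d - real (tau1 n d p)) / (real n - 2)"
        using p unfolding Lo_def Hi_def by auto
    qed
    then show "p \<in> {p. counter_point n d c p \<and> tau1 n d p = r}"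
      using p assms(4,5) unfolding counter_point_def by auto
  qed
  have fin_good: "finite {p. counter_point n d c p \<and> tau1 n d p = r}"
    by (rule finite_subset[OF _ finS[of n d r]]) (auto simp: counter_point_def)
  have fU: "finite U" unfolding U_def
  proof (intro finite_UN_I finite_UnI)
    fix i show "finite (Lo i)" unfolding Lo_def by (rule finite_subset[OF _ finS[of n d r]]) auto
    show "finite (Hi i)" unfolding Hi_def by (rule finite_subset[OF _ finS[of n d r]]) auto
  qed simp
  have "T \<le> real (card (?S - U)) + real (card U)"
  proof -
    have "card ?S \<le> card ((?S - U) \<union> U)" by (rule card_mono) (use fU finS[of n d r] in auto)
    also have "\<dots> \<le> card (?S - U) + card U" by (rule card_Un_le)
    finally show ?thesis using cS by linarith
  qed
  moreover have "real (card (?S - U)) \<le> real (card {p. counter_point n d c p \<and> tau1 n d p = r})"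
    using card_mono[OF fin_good sub] by simp
  moreover have "real (card U) \<le> (N - 2) * (2 * (T * exp (- E)))"
  proof -
    have "card U \<le> (\<Sum>i\<in>{2..<n}. card (Lo i \<union> Hi i))" unfolding U_def by (rule card_UN_le) simp
    also have "\<dots> \<le> (\<Sum>i\<in>{2..<n}. card (Lo i) + card (Hi i))" by (rule sum_mono) (rule card_Un_le)
    finally have "real (card U) \<le> real (\<Sum>i\<in>{2..<n}. card (Lo i) + card (Hi i))"
      by (simp only: of_nat_le_iff)
    also have "\<dots> = (\<Sum>i\<in>{2..<n}. real (card (Lo i)) + real (card (Hi i)))" by simp
    also have "\<dots> \<le> (\<Sum>i\<in>{2..<n}. 2 * (T * exp (- E)))"
    proof (rule sum_mono)
      fix i assume "i \<in> {2..<n}"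
      then have "1 < i" "i < n" by auto
      then show "real (card (Lo i)) + real (card (Hi i)) \<le> 2 * (T * exp (- E))"
        using Lo_b Hi_b by fastforce
    qed
    also have "\<dots> = (N - 2) * (2 * (T * exp (- E)))"
      using assms(1) unfolding N_def by (simp add: of_nat_diff)
    finally show ?thesis .
  qed
  moreover have "(1 - 2 * (N - 2) * exp (- E)) * T = T - (N - 2) * (2 * (T * exp (- E)))"
    by (simp add: algebra_simps)
  ultimately have main: "real (card {p. counter_point n d c p \<and> tau1 n d p = r}) \<ge> (1 - 2 * (N - 2) * exp (- E)) * T"
    by linarith
  show ?thesis
  proof (cases "N - 2 \<le> D")
    case True
    have "(1 - 2 * D * exp (- E)) * T \<le> (1 - 2 * (N - 2) * exp (- E)) * T"
      using True T0 by (intro mult_right_mono) auto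
    then show ?thesis using main unfolding T_def E_def D_def N_def by (simp add: mult.assoc)
  next
    case False
    have "E \<le> 1/40000" unfolding E_def using False N3 D1 by (simp add: field_simps)
    then have "exp (- E) \<ge> 1 - 1/40000" using exp_ge_add_one_self[of "- E"] by linarith
    then have "2 * D * exp (- E) \<ge> 2 * D * (1 - 1/40000)" using D1 by (intro mult_left_mono) auto
    moreover have "2 * D * (1 - 1/40000) = (39999/20000) * D" by simp
    ultimately have "1 - 2 * D * exp (- E) \<le> 0" using D1 by linarith
    then have "(1 - 2 * D * exp (- E)) * T \<le> 0" using T0 by (simp add: mult_nonpos_nonneg)
    then show ?thesis unfolding T_def E_def D_def N_def by (simp add: mult.assoc)
  qed
qed

end
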